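(* Let $(\mathbf{x}_i,y_i)_{i=1}^n\subset\mathbb{R}^d\times\{\pm1\}$ satisfy $\|\mathbf{x}_i\|\le 1$ for all $i$, and suppose there are $\gamma>0$ and a unit vector $\mathbf{w}_*$ with $y_i\mathbf{x}_i^\top\mathbf{w}_*\ge\gamma$ for all $i$. Let $L(\mathbf{w})=\frac1n\sum_{i=1}^n\ln\big(1+\exp(-y_i\mathbf{x}_i^\top\mathbf{w})\big)$ and run gradient descent $\mathbf{w}_t=\mathbf{w}_{t-1}-\eta\nabla L(\mathbf{w}_{t-1})$, $t\ge1$, with an arbitrary constant stepsize $\eta>0$ and $\mathbf{w}_0=0$. Let $F(\mathbf{w}):=\frac1n\sum_{i=1}^n\exp(-y_i\mathbf{x}_i^\top\mathbf{w})$. Then: (1) For every integer $t\ge1$, \[\frac1t\sum_{k=0}^{t-1}L(\mathbf{w}_k)\le\frac{1+\ln^2(\gamma^2\eta t)+\eta^2/4}{\gamma^2\eta t}.\] (2) If $s\ge0$ is such that $L(\mathbf{w}_s)\le 1/\eta$, then $(L(\mathbf{w}_t))_{t\ge s}$ is non-increasing, and for every $t>s$, \[L(\mathbf{w}_t)\le\frac{2F(\mathbf{w}_s)+\ln^2(\gamma^2\eta(t-s))}{\gamma^2\eta(t-s)}.\] (3) Let $\tau:=\frac{60}{\gamma^2}\max\Big\{\eta,\ n,\ e,\ \frac{\eta+n}{\eta}\ln\frac{\eta+n}{\eta}\Big\}$. Then there exists an integer $0\le s\le\tau$ such that $L(\mathbf{w}_s)\le1/\eta$ and $F(\mathbf{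w}_s)\le1$.
   Context: Logistic regression with linearly separable data; $\eta$ may be arbitrarily large (no smoothness-based restriction on the stepsize). *)

theory Defs
  imports "HOL-Analysis.Analysis"
begin

text \<open>Logistic empirical risk: data points indexed by i < n (i.e. the paper's 1..n).\<close>
definition logistic_risk :: "nat \<Rightarrow> (nat \<Rightarrow> 'a::euclidean_space) \<Rightarrow> (nat \<Rightarrow> real) \<Rightarrow> 'a \<Rightarrow> real" where
  "logistic_risk n x y w = (1 / real n) * (\<Sum>i<n. ln (1 + exp (- (y i * (x i \<bullet> w)))))"

definition exp_risk :: "nat \<Rightarrow> (nat \<Rightarrow> 'a::euclidean_space) \<Rightarrow> (nat \<Rightarrow> real) \<Rightarrow> 'a \<Rightarrow> real" where
  "exp_risk n x y w = (1 / real n) * (\<Sum>i<n. exp (- (y i * (x i \<bullet> w))))"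

definition is_GD :: "('a::euclidean_space \<Rightarrow> real) \<Rightarrow> real \<Rightarrow> (nat \<Rightarrow> 'a) \<Rightarrow> bool" where
  "is_GD f eta w \<longleftrightarrow> w 0 = 0 \<and>
     (\<forall>t. \<exists>g. (f has_derivative (\<lambda>h. g \<bullet> h)) (at (w t)) \<and> w (Suc t) = w t - eta *\<^sub>R g)"

end

theory Submission
  imports Defs
begin


definition pp :: "real \<Rightarrow> real" where "pp m = 1 / (1 + exp m)"

lemma one_exp_pos: "0 < 1 + exp (m::real)"
  by (smt (verit) exp_gt_zero)

lemma pp_pos: "0 < pp m" and pp_lt1: "pp m < 1"
  using one_exp_pos[of m] by (auto simp: pp_def)

lemma lg_le_exp: "ln (1 + exp (- m)) \<le> exp (- (m::real))"
  using ln_add_one_self_le_self[of "exp (- m)"] by simp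

lemma pp_le_lg: "pp m \<le> ln (1 + exp (- m))"
proof -
  have "ln (1 / (1 + exp (-m))) \<le> 1 / (1 + exp (-m)) - 1"
    by (rule ln_le_minus_one) (simp add: one_exp_pos)
  moreover have "1 / (1 + exp (-m)) - 1 = - pp m"
  proof -
    have e: "exp (-m) = 1 / exp m" by (simp add: exp_minus divide_inverse)
    have n: "1 + exp m \<noteq> 0" "exp m \<noteq> 0" using one_exp_pos[of m] by auto
    show ?thesis unfolding pp_def e using n
      by (simp add: field_simps)
  qed
  moreover have "ln (1 / (1 + exp (-m))) = - ln (1 + exp (-m))"
    using one_exp_pos[of "-m"] by (simp add: ln_div)
  ultimately show ?thesis by linarith
qed

lemma pp_mult: "(1 + exp (- m)) * pp m = exp (- m)"
proof -
  have "exp (-m) * exp m = 1" by (simp add: exp_minus)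
  then have a: "1 + exp (- m) = exp (-m) * (1 + exp m)" by (simp add: algebra_simps)
  have "1 + exp m \<noteq> 0" using one_exp_pos[of m] by simp
  then show ?thesis unfolding a pp_def by simp
qed

lemma lg_shift: "1 + exp (- (m + d)) = (1 + exp (- m)) * (1 - pp m + pp m * exp (- d))"
proof -
  have "exp (- (m+d)) = exp (-m) * exp (-d)" by (simp add: exp_add[symmetric])
  moreover have "(1 + exp (- m)) * (1 - pp m + pp m * exp (- d)) = (1 + exp (- m)) - (1 + exp (- m)) * pp m + ((1 + exp (- m)) * pp m) * exp (- d)"
    by (simp add: algebra_simps)
  ultimately show ?thesis unfolding pp_mult by simp
qed

lemma inner_pos: "0 < 1 - pp m + pp m * exp (- d)"
  using pp_lt1[of m] pp_pos[of m] by (smt (verit) exp_gt_zero mult_pos_pos)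

lemma lg_shift_ln: "ln (1 + exp (- (m + d))) = ln (1 + exp (- m)) + ln (1 - pp m + pp m * exp (- d))"
  using lg_shift[of m d] inner_pos[of m d] one_exp_pos[of "-m"] by (simp add: ln_mult)

lemma exp_quad: assumes "\<bar>u\<bar> \<le> (1::real)" shows "exp u \<le> 1 + u + u^2"
proof (cases "u \<ge> 0")
  case True then show ?thesis using exp_bound[of u] assms by auto
next
  case False
  have h1: "1 - u \<le> exp (- u)" using exp_ge_add_one_self[of "-u"] by simp
  have "exp u = 1 / exp (-u)" by (simp add: exp_minus divide_inverse)
  also have "\<dots> \<le> 1 / (1 - u)" using h1 False by (intro divide_left_mono) auto
  also have "\<dots> \<le> 1 + u + u^2"
  proof -
    have e: "(1 + u + u^2) * (1 - u) = 1 - u^3" by (simp add: algebra_simps power2_eq_square power3_eq_cube)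
    have "u^3 \<le> 0" using False mult_nonneg_nonpos[of "u*u" u] by (simp add: power3_eq_cube)
    then have "1 \<le> (1 + u + u^2) * (1 - u)" unfolding e by simp
    then show ?thesis using False by (subst pos_divide_le_eq) auto
  qed
  finally show ?thesis .
qed

lemma lg_smooth: assumes "\<bar>d\<bar> \<le> 1"
  shows "ln (1 + exp (- (m + d))) \<le> ln (1 + exp (- m)) - pp m * d + pp m * d^2"
proof -
  have "ln (1 - pp m + pp m * exp (- d)) \<le> (1 - pp m + pp m * exp (- d)) - 1"
    by (rule ln_le_minus_one[OF inner_pos])
  also have "\<dots> = pp m * (exp (-d) - 1)" by (simp add: algebra_simps)
  also have "\<dots> \<le> pp m * (-d + d^2)"
    using exp_quad[of "-d"] assms pp_pos[of m] by (intro mult_left_mono) auto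
  finally show ?thesis using lg_shift_ln[of m d] by (simp add: algebra_simps)
qed

lemma lg_convex: "ln (1 + exp (- m)) - pp m * d \<le> ln (1 + exp (- (m + d)))"
proof -
  have "exp ((1 - pp m) *\<^sub>R 0 + pp m *\<^sub>R (-d)) \<le> (1 - pp m) * exp 0 + pp m * exp (-d)"
    using pp_pos[of m] pp_lt1[of m] by (intro convex_onD[OF exp_convex]) auto
  then have "exp (- (pp m * d)) \<le> 1 - pp m + pp m * exp (- d)" by simp
  then have "- (pp m * d) \<le> ln (1 - pp m + pp m * exp (- d))"
    using inner_pos[of m d] by (simp add: ln_ge_iff)
  then show ?thesis using lg_shift_ln[of m d] by simp
qed

lemma pp_half: assumes "pp m \<le> 1/2" shows "0 \<le> m" and "exp (- m) \<le> 2 * pp m"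
proof -
  have "2 \<le> 1 + exp m" using assms one_exp_pos[of m] unfolding pp_def by (simp add: divide_le_eq)
  then have "1 \<le> exp m" by simp
  then show "0 \<le> m" by (simp add: one_le_exp_iff)
  have a: "1 / E \<le> 2 * (1 / (1 + E))" if "1 \<le> E" for E :: real
  proof -
    have "2 / (2 * E) \<le> 2 / (1 + E)" using that by (intro divide_left_mono) auto
    then show ?thesis by simp
  qed
  show "exp (- m) \<le> 2 * pp m" using a[OF \<open>1 \<le> exp m\<close>]
    by (simp add: pp_def exp_minus divide_inverse)
qed


locale lr =
  fixes n :: nat and x :: "nat \<Rightarrow> 'a::euclidean_space" and y :: "nat \<Rightarrow> real"
    and \<gamma> \<eta> :: real and ws :: 'a and w :: "nat \<Rightarrow> 'a"
  assumes n_pos: "n \<ge> 1"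
    and labels: "\<forall>i<n. y i \<in> {-1, 1}"
    and bounded: "\<forall>i<n. norm (x i) \<le> 1"
    and gamma_pos: "\<gamma> > 0"
    and ws_unit: "norm ws = 1"
    and margin: "\<forall>i<n. y i * (x i \<bullet> ws) \<ge> \<gamma>"
    and eta_pos: "\<eta> > 0"
    and GD: "is_GD (logistic_risk n x y) \<eta> w"
begin

abbreviation "L \<equiv> logistic_risk n x y"
abbreviation "F \<equiv> exp_risk n x y"

definition mm :: "nat \<Rightarrow> 'a \<Rightarrow> real" where "mm i v = y i * (x i \<bullet> v)"
definition grad :: "'a \<Rightarrow> 'a" where
  "grad v = - ((1 / real n) *\<^sub>R (\<Sum>i<n. (pp (mm i v) * y i) *\<^sub>R x i))"
definition GG :: "'a \<Rightarrow> real" where "GG v = (1 / real n) * (\<Sum>i<n. pp (mm i v))"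

lemma n_real: "real n > 0" using n_pos by simp

lemma L_eq: "L v = (1 / real n) * (\<Sum>i<n. ln (1 + exp (- mm i v)))"
  by (simp add: logistic_risk_def mm_def)

lemma F_eq: "F v = (1 / real n) * (\<Sum>i<n. exp (- mm i v))"
  by (simp add: exp_risk_def mm_def)

lemma yabs: "i < n \<Longrightarrow> \<bar>y i\<bar> = 1" using labels by auto

lemma mm_add: "mm i (u + v) = mm i u + mm i v" and mm_diff: "mm i (u - v) = mm i u - mm i v"
  and mm_scale: "mm i (c *\<^sub>R v) = c * mm i v" and mm_minus: "mm i (- v) = - mm i v"
  by (simp_all add: mm_def inner_add_right inner_diff_right algebra_simps)

lemma grad_inner: "grad v \<bullet> z = - ((1 / real n) * (\<Sum>i<n. pp (mm i v) * mm i z))"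
  by (simp add: grad_def inner_sum_left mm_def algebra_simps)

lemma lg_deriv: "((\<lambda>z. ln (1 + exp (- z))) has_real_derivative (- pp z)) (at z)"
proof -
  have "((\<lambda>z. ln (1 + exp (- z))) has_real_derivative (1 / (1 + exp (- z)) * (exp (- z) * (- 1)))) (at z)"
    by (rule derivative_eq_intros refl | simp add: one_exp_pos)+
  moreover have "1 / (1 + exp (- z)) * (exp (- z) * (- 1)) = - pp z"
    using pp_mult[of z] one_exp_pos[of "-z"] by (simp add: field_simps)
  ultimately show ?thesis by simp
qed

lemma L_deriv: "(L has_derivative (\<lambda>h. grad v \<bullet> h)) (at v)"
proof -
  have d: "((\<lambda>v. ln (1 + exp (- mm i v))) has_derivative (\<lambda>h. - pp (mm i v) * mm i h)) (at v)" for i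
  proof -
    have "(mm i has_derivative mm i) (at v)"
      unfolding mm_def by (auto intro!: derivative_eq_intros)
    from has_derivative_compose[OF this has_field_derivative_imp_has_derivative[OF lg_deriv[of "mm i v"]]]
    show ?thesis by (simp add: mult.commute)
  qed
  have "((\<lambda>v. (1 / real n) * (\<Sum>i<n. ln (1 + exp (- mm i v)))) has_derivative
     (\<lambda>h. (1 / real n) * (\<Sum>i<n. - pp (mm i v) * mm i h))) (at v)"
    by (intro has_derivative_mult_right has_derivative_sum d)
  moreover have "(\<lambda>h. (1 / real n) * (\<Sum>i<n. - pp (mm i v) * mm i h)) = (\<lambda>h. grad v \<bullet> h)"
    by (rule ext) (simp add: grad_inner sum_negf)
  moreover have "(\<lambda>v. (1 / real n) * (\<Sum>i<n. ln (1 + exp (- mm i v)))) = L"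
    by (rule ext) (simp add: L_eq)
  ultimately show ?thesis by simp
qed

lemma gd0: "w 0 = 0" using GD by (simp add: is_GD_def)

lemma gd_step: "w (Suc t) = w t - \<eta> *\<^sub>R grad (w t)"
proof -
  obtain g where g: "(L has_derivative (\<lambda>h. g \<bullet> h)) (at (w t))" "w (Suc t) = w t - \<eta> *\<^sub>R g"
    using GD unfolding is_GD_def by blast
  have "(\<lambda>h. g \<bullet> h) = (\<lambda>h. grad (w t) \<bullet> h)"
    by (rule has_derivative_unique[OF g(1) L_deriv])
  then have "g \<bullet> (g - grad (w t)) = grad (w t) \<bullet> (g - grad (w t))" by metis
  then have "(g - grad (w t)) \<bullet> (g - grad (w t)) = 0" by (simp add: inner_diff_left)
  then have "g = grad (w t)" by simp
  with g(2) show ?thesis by simp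
qed

lemma GG_nonneg: "0 \<le> GG v"
  unfolding GG_def using pp_pos by (intro mult_nonneg_nonneg sum_nonneg) (auto intro: less_imp_le)

lemma GG_le1: "GG v \<le> 1"
proof -
  have "(\<Sum>i<n. pp (mm i v)) \<le> (\<Sum>i<n. 1)" using pp_lt1 by (intro sum_mono) (auto intro: less_imp_le)
  then show ?thesis unfolding GG_def using n_real by (simp add: divide_simps)
qed

lemma GG_le_L: "GG v \<le> L v"
  unfolding GG_def L_eq using n_real pp_le_lg by (intro mult_left_mono sum_mono) auto

lemma L_le_F: "L v \<le> F v"
  unfolding F_eq L_eq using n_real lg_le_exp by (intro mult_left_mono sum_mono) auto

lemma norm_grad: "norm (grad v) \<le> GG v"
proof -
  have "norm (\<Sum>i<n. (pp (mm i v) * y i) *\<^sub>R x i) \<le> (\<Sum>i<n. norm ((pp (mm i v) * y i) *\<^sub>R x i))"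
    by (rule norm_sum)
  also have "\<dots> \<le> (\<Sum>i<n. pp (mm i v))"
  proof (rule sum_mono)
    fix i assume "i \<in> {..<n}"
    then have "\<bar>y i\<bar> = 1" "norm (x i) \<le> 1" using yabs bounded by auto
    have "norm ((pp (mm i v) * y i) *\<^sub>R x i) = pp (mm i v) * norm (x i)"
      using pp_pos[of "mm i v"] \<open>\<bar>y i\<bar> = 1\<close> by (simp add: abs_mult)
    also have "\<dots> \<le> pp (mm i v)"
      using pp_pos[of "mm i v"] \<open>norm (x i) \<le> 1\<close> by (intro mult_left_le) auto
    finally show "norm ((pp (mm i v) * y i) *\<^sub>R x i) \<le> pp (mm i v)" .
  qed
  finally have "norm (\<Sum>i<n. (pp (mm i v) * y i) *\<^sub>R x i) \<le> (\<Sum>i<n. pp (mm i v))" .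
  moreover have "norm (grad v) = (1 / real n) * norm (\<Sum>i<n. (pp (mm i v) * y i) *\<^sub>R x i)"
    unfolding grad_def norm_minus_cancel norm_scaleR
    using abs_of_pos[OF divide_pos_pos[OF zero_less_one n_real]] by (simp only:)
  ultimately show ?thesis unfolding GG_def
    using mult_left_mono[of "norm (\<Sum>i<n. (pp (mm i v) * y i) *\<^sub>R x i)" "\<Sum>i<n. pp (mm i v)" "1 / real n"] n_real
    by simp
qed

lemma grad_ws: "grad v \<bullet> ws \<le> - \<gamma> * GG v"
proof -
  have "(\<Sum>i<n. pp (mm i v) * \<gamma>) \<le> (\<Sum>i<n. pp (mm i v) * mm i ws)"
  proof (rule sum_mono)
    fix i assume "i \<in> {..<n}"
    then have "\<gamma> \<le> mm i ws" using margin by (simp add: mm_def)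
    then show "pp (mm i v) * \<gamma> \<le> pp (mm i v) * mm i ws"
      using pp_pos[of "mm i v"] by (intro mult_left_mono) auto
  qed
  then have "\<gamma> * (\<Sum>i<n. pp (mm i v)) \<le> (\<Sum>i<n. pp (mm i v) * mm i ws)"
    by (simp add: sum_distrib_left mult.commute)
  then show ?thesis unfolding grad_inner GG_def using n_real
    by (simp add: divide_simps)
qed


lemma convex_L: "L v + grad v \<bullet> (u - v) \<le> L u"
proof -
  have "(\<Sum>i<n. ln (1 + exp (- mm i v)) - pp (mm i v) * mm i (u - v)) \<le> (\<Sum>i<n. ln (1 + exp (- mm i u)))"
  proof (rule sum_mono)
    fix i
    have "mm i v + mm i (u - v) = mm i u" by (simp add: mm_diff)
    then show "ln (1 + exp (- mm i v)) - pp (mm i v) * mm i (u - v) \<le> ln (1 + exp (- mm i u))"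
      using lg_convex[of "mm i v" "mm i (u - v)"] by simp
  qed
  then have "(1 / real n) * (\<Sum>i<n. ln (1 + exp (- mm i v)) - pp (mm i v) * mm i (u - v)) \<le> (1 / real n) * (\<Sum>i<n. ln (1 + exp (- mm i u)))"
    using n_real by (intro mult_left_mono) auto
  moreover have "(1 / real n) * (\<Sum>i<n. ln (1 + exp (- mm i v)) - pp (mm i v) * mm i (u - v)) = L v + grad v \<bullet> (u - v)"
    unfolding L_eq grad_inner sum_subtractf by (simp add: right_diff_distrib)
  ultimately show ?thesis unfolding L_eq[of u] by simp
qed

lemma mm_bound: "i < n \<Longrightarrow> \<bar>mm i z\<bar> \<le> norm z"
proof -
  assume i: "i < n"
  have "\<bar>mm i z\<bar> = \<bar>x i \<bullet> z\<bar>" using yabs[OF i] by (simp add: mm_def abs_mult)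
  also have "\<dots> \<le> norm (x i) * norm z" by (rule Cauchy_Schwarz_ineq2)
  also have "\<dots> \<le> norm z" using bounded i by (intro mult_left_le_one_le) auto
  finally show ?thesis .
qed

lemma descent: assumes "\<eta> * GG v \<le> 1" shows "L (v - \<eta> *\<^sub>R grad v) \<le> L v"
proof -
  define g where "g = grad v"
  define v' where "v' = v - \<eta> *\<^sub>R g"
  have ng: "norm g \<le> GG v" unfolding g_def by (rule norm_grad)
  have key: "ln (1 + exp (- mm i v')) \<le> ln (1 + exp (- mm i v)) - pp (mm i v) * mm i (v' - v) + pp (mm i v) * (\<eta>^2 * (norm g)^2)"
    if i: "i < n" for i
  proof -
    have d: "mm i (v' - v) = - \<eta> * mm i g" unfolding v'_def by (simp add: mm_scale mm_diff mm_minus)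
    have b: "\<bar>mm i g\<bar> \<le> norm g" by (rule mm_bound[OF i])
    have "\<bar>mm i (v' - v)\<bar> \<le> \<eta> * norm g" unfolding d using b eta_pos by (simp add: abs_mult)
    also have "\<dots> \<le> \<eta> * GG v" using ng eta_pos by (intro mult_left_mono) auto
    finally have d1: "\<bar>mm i (v' - v)\<bar> \<le> 1" using assms by linarith
    have "(mm i (v' - v))^2 = \<eta>^2 * (\<bar>mm i g\<bar>)^2" unfolding d by (simp add: power_mult_distrib)
    also have "\<dots> \<le> \<eta>^2 * (norm g)^2" using b by (intro mult_left_mono power_mono) auto
    finally have d2: "(mm i (v' - v))^2 \<le> \<eta>^2 * (norm g)^2" .
    have "mm i v + mm i (v' - v) = mm i v'" by (simp add: mm_diff)
    then have "ln (1 + exp (- mm i v')) \<le> ln (1 + exp (- mm i v)) - pp (mm i v) * mm i (v' - v) + pp (mm i v) * (mm i (v' - v))^2"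
      using lg_smooth[OF d1, of "mm i v"] by simp
    also have "\<dots> \<le> ln (1 + exp (- mm i v)) - pp (mm i v) * mm i (v' - v) + pp (mm i v) * (\<eta>^2 * (norm g)^2)"
      using d2 pp_pos[of "mm i v"] by (simp add: mult_left_mono)
    finally show ?thesis .
  qed
  have "(\<Sum>i<n. ln (1 + exp (- mm i v'))) \<le> (\<Sum>i<n. ln (1 + exp (- mm i v)) - pp (mm i v) * mm i (v' - v) + pp (mm i v) * (\<eta>^2 * (norm g)^2))"
    using key by (intro sum_mono) auto
  then have "(1 / real n) * (\<Sum>i<n. ln (1 + exp (- mm i v'))) \<le> (1 / real n) * (\<Sum>i<n. ln (1 + exp (- mm i v)) - pp (mm i v) * mm i (v' - v) + pp (mm i v) * (\<eta>^2 * (norm g)^2))"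
    using n_real by (intro mult_left_mono) auto
  also have "\<dots> = L v + g \<bullet> (v' - v) + GG v * (\<eta>^2 * (norm g)^2)"
    unfolding L_eq g_def grad_inner GG_def sum.distrib sum_subtractf sum_distrib_right[symmetric]
    by (simp add: algebra_simps)
  also have "g \<bullet> (v' - v) = - \<eta> * (norm g)^2"
    unfolding v'_def by (simp add: power2_norm_eq_inner)
  finally have "L v' \<le> L v - \<eta> * (norm g)^2 + (\<eta> * GG v) * (\<eta> * (norm g)^2)"
    unfolding L_eq[of v'] by (simp add: algebra_simps power2_eq_square)
  moreover have "(\<eta> * GG v) * (\<eta> * (norm g)^2) \<le> 1 * (\<eta> * (norm g)^2)"
    using assms eta_pos by (intro mult_right_mono) auto
  ultimately show ?thesis unfolding v'_def g_def by simp
qed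

lemma norm_expand: "(norm (v - \<eta> *\<^sub>R g - u))^2 = (norm (v - u))^2 - 2 * \<eta> * (g \<bullet> (v - u)) + \<eta>^2 * (norm g)^2"
proof -
  have e: "v - \<eta> *\<^sub>R g - u = (v - u) - \<eta> *\<^sub>R g" by (simp add: algebra_simps)
  have gen: "(norm (a - c *\<^sub>R b))^2 = (norm a)^2 - 2 * c * (b \<bullet> a) + c^2 * (norm b)^2" for a b :: "'b::real_inner" and c :: real
  proof -
    have "(a - c *\<^sub>R b) \<bullet> (a - c *\<^sub>R b) = a \<bullet> a - c * (a \<bullet> b) - c * (b \<bullet> a) + c * (c * (b \<bullet> b))"
      by (simp only: inner_diff_left inner_diff_right inner_scaleR_left inner_scaleR_right) (simp add: algebra_simps)
    moreover have "a \<bullet> b = b \<bullet> a" by (rule inner_commute)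
    ultimately show ?thesis unfolding power2_norm_eq_inner by (simp add: power2_eq_square)
  qed
  show ?thesis unfolding e using gen[of "v - u" \<eta> g] by simp
qed


lemma F_shift: assumes R: "0 \<le> R" shows "F (v + R *\<^sub>R ws) \<le> exp (- (\<gamma> * R)) * F v"
proof -
  have "(\<Sum>i<n. exp (- mm i (v + R *\<^sub>R ws))) \<le> (\<Sum>i<n. exp (- (\<gamma> * R)) * exp (- mm i v))"
  proof (rule sum_mono)
    fix i assume "i \<in> {..<n}"
    then have gm: "\<gamma> \<le> mm i ws" using margin by (simp add: mm_def)
    have "\<gamma> * R \<le> R * mm i ws" using mult_left_mono[OF gm R] by (simp add: mult.commute)
    then have "- mm i (v + R *\<^sub>R ws) \<le> - (\<gamma> * R) + - mm i v" by (simp add: mm_add mm_scale)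
    then show "exp (- mm i (v + R *\<^sub>R ws)) \<le> exp (- (\<gamma> * R)) * exp (- mm i v)" by (simp add: mult_exp_exp)
  qed
  then have "(1 / real n) * (\<Sum>i<n. exp (- mm i (v + R *\<^sub>R ws))) \<le> (1 / real n) * (\<Sum>i<n. exp (- (\<gamma> * R)) * exp (- mm i v))"
    using n_real by (intro mult_left_mono) auto
  then show ?thesis unfolding F_eq by (simp add: sum_distrib_left[symmetric] algebra_simps)
qed

lemma mm_zero: "mm i 0 = 0" by (simp add: mm_def)

lemma L0: "L 0 = ln 2"
  unfolding L_eq mm_zero using n_real by simp

lemma F0: "F 0 = 1"
  unfolding F_eq mm_zero using n_real by simp

lemma small_GG: assumes "GG v \<le> 1 / (2 * real n)" shows "F v \<le> 1" "F v \<le> 2 * GG v"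
proof -
  have each: "pp (mm i v) \<le> 1/2" if i: "i < n" for i
  proof -
    have "pp (mm i v) \<le> (\<Sum>j<n. pp (mm j v))"
      using i pp_pos by (intro member_le_sum) (auto intro: less_imp_le)
    also have "\<dots> = real n * GG v" unfolding GG_def using n_real by simp
    also have "\<dots> \<le> real n * (1 / (2 * real n))" using assms n_real by (intro mult_left_mono) auto
    also have "\<dots> = 1/2" using n_real by simp
    finally show ?thesis .
  qed
  have a: "(\<Sum>i<n. exp (- mm i v)) \<le> (\<Sum>i<n. 1)"
  proof (rule sum_mono)
    fix i assume "i \<in> {..<n}"
    then have "0 \<le> mm i v" using pp_half(1) each by auto
    then show "exp (- mm i v) \<le> 1" by simp
  qed
  have b: "(\<Sum>i<n. exp (- mm i v)) \<le> (\<Sum>i<n. 2 * pp (mm i v))"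
  proof (rule sum_mono)
    fix i assume "i \<in> {..<n}"
    then show "exp (- mm i v) \<le> 2 * pp (mm i v)" using pp_half(2) each by auto
  qed
  have "(1 / real n) * (\<Sum>i<n. exp (- mm i v)) \<le> (1 / real n) * (\<Sum>i<n. 1)"
    using a n_real by (intro mult_left_mono) auto
  then show "F v \<le> 1" unfolding F_eq using n_real by simp
  have "(1 / real n) * (\<Sum>i<n. exp (- mm i v)) \<le> (1 / real n) * (\<Sum>i<n. 2 * pp (mm i v))"
    using b n_real by (intro mult_left_mono) auto
  then show "F v \<le> 2 * GG v" unfolding F_eq GG_def by (simp add: sum_distrib_left[symmetric])
qed


lemma normg_sq: "(norm (grad v))^2 \<le> GG v * GG v"
proof -
  have "(norm (grad v))^2 \<le> (GG v)^2" using norm_grad[of v] by (intro power_mono) auto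
  then show ?thesis by (simp add: power2_eq_square)
qed

lemma stepA:
  "(norm (w (Suc k) - (u1 + (\<eta> / (2 * \<gamma>)) *\<^sub>R ws)))^2
     \<le> (norm (w k - (u1 + (\<eta> / (2 * \<gamma>)) *\<^sub>R ws)))^2 + 2 * \<eta> * (L u1 - L (w k))"
proof -
  define v where "v = w k"
  define g where "g = grad v"
  define u where "u = u1 + (\<eta> / (2 * \<gamma>)) *\<^sub>R ws"
  have e: "(norm (w (Suc k) - u))^2 = (norm (v - u))^2 - 2 * \<eta> * (g \<bullet> (v - u)) + \<eta>^2 * (norm g)^2"
    unfolding gd_step v_def g_def by (rule norm_expand)
  have c1: "g \<bullet> (u1 - v) \<le> L u1 - L v" using convex_L[of v u1] unfolding g_def by simp
  have c2: "g \<bullet> ws \<le> - \<gamma> * GG v" unfolding g_def by (rule grad_ws)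
  have sp: "- (2 * \<eta> * (g \<bullet> (v - u))) = 2 * \<eta> * (g \<bullet> (u1 - v)) + (\<eta>^2 / \<gamma>) * (g \<bullet> ws)"
    unfolding u_def using gamma_pos by (simp add: inner_diff_right inner_add_right power2_eq_square field_simps)
  have "(\<eta>^2 / \<gamma>) * (g \<bullet> ws) \<le> (\<eta>^2 / \<gamma>) * (- \<gamma> * GG v)"
    using c2 gamma_pos by (intro mult_left_mono) auto
  also have "\<dots> = - (\<eta>^2 * GG v)" using gamma_pos by simp
  finally have t2: "(\<eta>^2 / \<gamma>) * (g \<bullet> ws) \<le> - (\<eta>^2 * GG v)" .
  have "2 * \<eta> * (g \<bullet> (u1 - v)) \<le> 2 * \<eta> * (L u1 - L v)" using c1 eta_pos by (intro mult_left_mono) auto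
  moreover have "\<eta>^2 * (norm g)^2 \<le> \<eta>^2 * GG v"
  proof -
    have "(norm g)^2 \<le> GG v * GG v" unfolding g_def by (rule normg_sq)
    also have "\<dots> \<le> GG v * 1" using GG_le1[of v] GG_nonneg[of v] by (intro mult_left_mono) auto
    finally show ?thesis by (intro mult_left_mono) auto
  qed
  ultimately show ?thesis using e sp t2 unfolding u_def[symmetric] v_def by linarith
qed

lemma stepB: assumes "L (w k) \<le> 1 / \<eta>"
  shows "(norm (w (Suc k) - u))^2 \<le> (norm (w k - u))^2 + 2 * \<eta> * L u - \<eta> * L (w k)"
proof -
  define v where "v = w k"
  define g where "g = grad v"
  have e: "(norm (w (Suc k) - u))^2 = (norm (v - u))^2 - 2 * \<eta> * (g \<bullet> (v - u)) + \<eta>^2 * (norm g)^2"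
    unfolding gd_step v_def g_def by (rule norm_expand)
  have c1: "g \<bullet> (u - v) \<le> L u - L v" using convex_L[of v u] unfolding g_def by simp
  have sp: "- (2 * \<eta> * (g \<bullet> (v - u))) = 2 * \<eta> * (g \<bullet> (u - v))"
    by (simp add: inner_diff_right algebra_simps)
  have a1: "2 * \<eta> * (g \<bullet> (u - v)) \<le> 2 * \<eta> * (L u - L v)" using c1 eta_pos by (intro mult_left_mono) auto
  have eg: "\<eta> * GG v \<le> \<eta> * L v" using GG_le_L[of v] eta_pos by (intro mult_left_mono) auto
  have el: "\<eta> * L v \<le> 1" using assms eta_pos unfolding v_def by (simp add: field_simps)
  have "\<eta>^2 * (norm g)^2 \<le> \<eta>^2 * (GG v * GG v)" unfolding g_def using normg_sq by (intro mult_left_mono) auto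
  also have "\<dots> = (\<eta> * GG v) * (\<eta> * GG v)" by (simp add: power2_eq_square algebra_simps)
  also have "\<dots> \<le> (\<eta> * GG v) * 1"
  proof -
    have eg1: "\<eta> * GG v \<le> 1" using eg el by linarith
    have "0 \<le> \<eta> * GG v" using GG_nonneg[of v] eta_pos by simp
    then show ?thesis by (rule mult_left_mono[OF eg1])
  qed
  also have "\<dots> \<le> \<eta> * L v" using eg by simp
  finally have a2: "\<eta>^2 * (norm g)^2 \<le> \<eta> * L v" .
  have "2 * \<eta> * (L u - L v) = 2 * \<eta> * L u - 2 * \<eta> * L v" by (simp add: algebra_simps)
  then show ?thesis using e sp a1 a2 unfolding v_def by linarith
qed

lemma desc_step: assumes "L (w t) \<le> 1 / \<eta>" shows "L (w (Suc t)) \<le> L (w t)"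
proof -
  have "\<eta> * GG (w t) \<le> \<eta> * L (w t)" using GG_le_L eta_pos by (intro mult_left_mono) auto
  also have "\<dots> \<le> 1" using assms eta_pos by (simp add: field_simps)
  finally show ?thesis unfolding gd_step by (rule descent)
qed

lemma stable_le: assumes "L (w s) \<le> 1 / \<eta>" "s \<le> t" shows "L (w t) \<le> L (w s)"
  using assms(2)
proof (induction t rule: dec_induct)
  case base then show ?case by simp
next
  case (step t)
  then have "L (w t) \<le> 1 / \<eta>" using assms(1) by linarith
  then show ?case using desc_step step by (meson order_trans)
qed

lemma stable_mono: assumes "L (w s) \<le> 1 / \<eta>" "s \<le> a" "a \<le> b" shows "L (w b) \<le> L (w a)"
proof -
  have "L (w a) \<le> 1 / \<eta>" using stable_le[OF assms(1,2)] assms(1) by linarith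
  then show ?thesis using stable_le assms(3) by blast
qed

lemma perceptron: "\<eta> * \<gamma> * (\<Sum>k<t. GG (w k)) \<le> w t \<bullet> ws"
proof (induction t)
  case 0 then show ?case by (simp add: gd0)
next
  case (Suc t)
  have "w (Suc t) \<bullet> ws = w t \<bullet> ws - \<eta> * (grad (w t) \<bullet> ws)" by (simp add: gd_step inner_diff_left)
  moreover have "\<eta> * (grad (w t) \<bullet> ws) \<le> \<eta> * (- \<gamma> * GG (w t))" using grad_ws eta_pos by (intro mult_left_mono) auto
  ultimately show ?case using Suc by (simp add: algebra_simps)
qed

lemma sumA: "(norm (w t - (u1 + (\<eta> / (2 * \<gamma>)) *\<^sub>R ws)))^2 + 2 * \<eta> * (\<Sum>k<t. L (w k))
   \<le> (norm (u1 + (\<eta> / (2 * \<gamma>)) *\<^sub>R ws))^2 + 2 * \<eta> * real t * L u1"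
proof (induction t)
  case 0
  have "norm (0 - (u1 + (\<eta> / (2 * \<gamma>)) *\<^sub>R ws)) = norm (u1 + (\<eta> / (2 * \<gamma>)) *\<^sub>R ws)"
    by (simp only: diff_0 norm_minus_cancel)
  then show ?case by (simp add: gd0)
next
  case (Suc t)
  then show ?case using stepA[of t u1] by (simp add: algebra_simps)
qed

lemma sumB: assumes "L (w s) \<le> 1 / \<eta>"
  shows "(norm (w (s + j) - u))^2 + \<eta> * (\<Sum>k<j. L (w (s + k))) \<le> (norm (w s - u))^2 + 2 * \<eta> * real j * L u"
proof (induction j)
  case 0 then show ?case by simp
next
  case (Suc j)
  have "L (w (s + j)) \<le> 1 / \<eta>" using stable_le[OF assms, of "s + j"] assms by simp
  from stepB[OF this, of u] Suc show ?case by (simp add: algebra_simps)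
qed


lemma L_nonneg: "0 \<le> L v" using GG_nonneg[of v] GG_le_L[of v] by linarith

lemma gamma_le1: "\<gamma> \<le> 1"
proof -
  have "\<gamma> \<le> mm 0 ws" using margin n_pos by (simp add: mm_def)
  also have "\<dots> \<le> \<bar>mm 0 ws\<bar>" by simp
  also have "\<dots> \<le> norm ws" using mm_bound n_pos by simp
  finally show ?thesis using ws_unit by simp
qed

lemma norm_ws_comb: "norm (R *\<^sub>R ws + c *\<^sub>R ws) = \<bar>R + c\<bar>"
proof -
  have "R *\<^sub>R ws + c *\<^sub>R ws = (R + c) *\<^sub>R ws" by (simp add: scaleR_add_left)
  then show ?thesis using ws_unit by simp
qed

lemma L_shift_bound: assumes "0 \<le> R" shows "L (v + R *\<^sub>R ws) \<le> exp (- (\<gamma> * R)) * F v"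
  using L_le_F[of "v + R *\<^sub>R ws"] F_shift[OF assms, of v] by linarith

lemma part1: assumes t: "1 \<le> t"
  shows "(1 / real t) * (\<Sum>k<t. L (w k)) \<le> (1 + (ln (\<gamma>^2 * \<eta> * real t))^2 + \<eta>^2 / 4) / (\<gamma>^2 * \<eta> * real t)"
proof -
  define a where "a = \<gamma>^2 * \<eta> * real t"
  define c where "c = \<eta> / (2 * \<gamma>)"
  define S where "S = (\<Sum>k<t. L (w k))"
  define N where "N = 1 + (ln a)^2 + \<eta>^2 / 4"
  have tpos: "0 < real t" using t by simp
  have gne: "\<gamma> \<noteq> 0" "\<eta> \<noteq> 0" using gamma_pos eta_pos by auto
  have apos: "0 < a" unfolding a_def using gamma_pos eta_pos tpos by simp
  have cpos: "0 \<le> c" unfolding c_def using gamma_pos eta_pos by simp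
  have main: "2 * \<eta> * S \<le> 2 * N / \<gamma>^2"
  proof (cases "1 \<le> a")
    case True
    define R where "R = ln a / \<gamma>"
    have R0: "0 \<le> R" unfolding R_def using True gamma_pos by simp
    have gR: "\<gamma> * R = ln a" unfolding R_def using gne by simp
    have A: "(norm (w t - (R *\<^sub>R ws + c *\<^sub>R ws)))^2 + 2 * \<eta> * S \<le> (norm (R *\<^sub>R ws + c *\<^sub>R ws))^2 + 2 * \<eta> * real t * L (R *\<^sub>R ws)"
      using sumA[of t "R *\<^sub>R ws"] unfolding c_def S_def by simp
    have Lb: "L (R *\<^sub>R ws) \<le> 1 / a"
    proof -
      have "L (0 + R *\<^sub>R ws) \<le> exp (- (\<gamma> * R)) * F 0" by (rule L_shift_bound[OF R0])
      then show ?thesis unfolding gR F0 using apos by (simp add: exp_minus exp_ln divide_inverse)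
    qed
    have "2 * \<eta> * real t * L (R *\<^sub>R ws) \<le> 2 * \<eta> * real t * (1 / a)"
      using Lb eta_pos tpos by (intro mult_left_mono) auto
    also have "\<dots> = 2 / \<gamma>^2" unfolding a_def using gne tpos by (simp add: field_simps)
    finally have B: "2 * \<eta> * real t * L (R *\<^sub>R ws) \<le> 2 / \<gamma>^2" .
    have C: "(norm (R *\<^sub>R ws + c *\<^sub>R ws))^2 \<le> 2 * R^2 + 2 * c^2"
    proof -
      have "(norm (R *\<^sub>R ws + c *\<^sub>R ws))^2 = (R + c)^2" unfolding norm_ws_comb by simp
      also have "\<dots> \<le> 2 * R^2 + 2 * c^2" using sum_squares_ge_zero[of "R - c" 0]
        by (simp add: power2_eq_square algebra_simps)
      finally show ?thesis .
    qed
    have D: "2 * R^2 + 2 * c^2 + 2 / \<gamma>^2 = 2 * N / \<gamma>^2"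
      unfolding N_def R_def c_def using gne by (simp add: field_simps power2_eq_square)
    show ?thesis using A B C D by (smt (verit) zero_le_power2)
  next
    case False
    have A: "(norm (w t - (0 *\<^sub>R ws + c *\<^sub>R ws)))^2 + 2 * \<eta> * S \<le> (norm (0 *\<^sub>R ws + c *\<^sub>R ws))^2 + 2 * \<eta> * real t * L (0 *\<^sub>R ws)"
      using sumA[of t "0 *\<^sub>R ws"] unfolding c_def S_def by simp
    have "L (0 *\<^sub>R ws) = ln 2" using L0 by simp
    also have "ln (2::real) \<le> 1" using ln_le_minus_one[of 2] by simp
    finally have Lb: "L (0 *\<^sub>R ws) \<le> 1" .
    have "2 * \<eta> * real t * L (0 *\<^sub>R ws) \<le> 2 * \<eta> * real t * 1"
      using Lb eta_pos tpos by (intro mult_left_mono) auto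
    also have "2 * \<eta> * real t * 1 = 2 * a / \<gamma>^2" unfolding a_def using gne by (simp add: field_simps)
    also have "2 * a / \<gamma>^2 \<le> 2 / \<gamma>^2" using False gamma_pos by (simp add: divide_right_mono)
    finally have B: "2 * \<eta> * real t * L (0 *\<^sub>R ws) \<le> 2 / \<gamma>^2" .
    have C: "(norm (0 *\<^sub>R ws + c *\<^sub>R ws))^2 = c^2" using norm_ws_comb[of 0 c] cpos by simp
    have D: "c^2 + 2 / \<gamma>^2 \<le> 2 * N / \<gamma>^2"
    proof -
      have "c^2 + 2 / \<gamma>^2 = (\<eta>^2 / 4 + 2) / \<gamma>^2" unfolding c_def using gne by (simp add: field_simps power2_eq_square)
      also have "\<dots> \<le> 2 * N / \<gamma>^2" unfolding N_def using gamma_pos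
        by (intro divide_right_mono) (auto simp: zero_le_power2)
      finally show ?thesis .
    qed
    show ?thesis using A B C D by (smt (verit) zero_le_power2)
  qed
  have "S \<le> N / (\<gamma>^2 * \<eta>)"
  proof -
    have m2: "S * (2 * \<eta>) \<le> 2 * N / \<gamma>^2" using main by (simp add: mult.commute)
    have "S \<le> (2 * N / \<gamma>^2) / (2 * \<eta>)" using pos_le_divide_eq[of "2 * \<eta>" S "2 * N / \<gamma>^2"] m2 eta_pos by simp
    also have "\<dots> = N / (\<gamma>^2 * \<eta>)" using gne by (simp add: field_simps)
    finally show ?thesis .
  qed
  then have "(1 / real t) * S \<le> (1 / real t) * (N / (\<gamma>^2 * \<eta>))" using tpos by (intro mult_left_mono) auto
  also have "\<dots> = N / a" unfolding a_def using tpos gne by (simp add: field_simps)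
  finally show ?thesis unfolding S_def N_def a_def .
qed

end



lemma ln60: "ln (60::real) \<le> 6"
proof -
  have "2 \<le> exp (1::real)" using exp_ge_add_one_self[of 1] by simp
  then have "2^6 \<le> (exp (1::real))^6" by (intro power_mono) auto
  also have "\<dots> = exp 6" by (simp add: exp_of_nat_mult[symmetric])
  finally have "60 \<le> exp (6::real)" by simp
  then have "ln 60 \<le> ln (exp (6::real))" by (subst ln_le_cancel_iff) auto
  then show ?thesis by simp
qed

lemma numeric:
  fixes \<eta> nn Mx a :: real
  assumes eta: "1 \<le> \<eta>" and nn: "1 \<le> nn"
    and M1: "\<eta> \<le> Mx" and M2: "nn \<le> Mx" and M3: "exp 1 \<le> Mx"
    and M4: "((\<eta> + nn) / \<eta>) * ln ((\<eta> + nn) / \<eta>) \<le> Mx"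
    and a1: "59 * \<eta> * Mx \<le> a" and a2: "a \<le> 60 * \<eta> * Mx"
  shows "2 * max nn \<eta> * (2 * ln a + \<eta> + 3/2) \<le> a"
proof -
  define r where "r = (\<eta> + nn) / \<eta>"
  have r1: "1 \<le> r" unfolding r_def using eta nn by (simp add: field_simps)
  have ee: "2 \<le> exp (1::real)" using exp_ge_add_one_self[of 1] by simp
  have Mpos: "2 \<le> Mx" using M3 ee by linarith
  have eMp: "0 < \<eta> * Mx" using eta Mpos by simp
  have ha: "0 < a" using a1 eMp by linarith
  have Mle1: "Mx \<le> \<eta> * Mx" using mult_right_mono[OF eta] Mpos by simp
  have lna0: "0 \<le> ln a"
  proof -
    have "1 * 2 \<le> \<eta> * Mx" using eta Mpos by (intro mult_mono) auto
    then have "1 \<le> 59 * \<eta> * Mx" by linarith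
    then show ?thesis using a1 by simp
  qed
  have la: "ln a \<le> 6 + ln \<eta> + ln Mx"
  proof -
    have p60: "0 < 60 * \<eta> * Mx" using mult_pos_pos[OF _ eMp, of 60] by (simp add: mult.assoc)
    have "ln a \<le> ln (60 * \<eta> * Mx)" using a2 ln_le_cancel_iff[OF ha p60] by simp
    also have "\<dots> = ln 60 + ln \<eta> + ln Mx" using eta Mpos by (simp add: ln_mult)
    finally show ?thesis using ln60 by linarith
  qed
  have le: "ln \<eta> \<le> \<eta> - 1" using eta by (intro ln_le_minus_one) auto
  have lm: "ln Mx \<le> Mx - 1" using Mpos by (intro ln_le_minus_one) auto
  have lm0: "0 \<le> ln Mx" using Mpos by simp
  have key: "r * ln Mx \<le> 2 * Mx"
  proof -
    have "ln Mx = ln r + ln (Mx / r)" using r1 Mpos by (simp add: ln_div)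
    moreover have "ln (Mx / r) \<le> Mx / r" using ln_le_minus_one[of "Mx / r"] r1 Mpos by simp
    moreover have "r * ln (Mx / r) \<le> r * (Mx / r)" using calculation(2) r1 by (intro mult_left_mono) auto
    ultimately have "r * ln Mx \<le> r * ln r + r * (Mx / r)" by (simp add: distrib_left)
    also have "r * (Mx / r) = Mx" using r1 by simp
    finally show ?thesis using M4 unfolding r_def[symmetric] by linarith
  qed
  have etar: "\<eta> * r = \<eta> + nn" unfolding r_def using eta by simp
  have n1: "nn * ln Mx \<le> 2 * \<eta> * Mx"
  proof -
    have "nn * ln Mx \<le> (\<eta> + nn) * ln Mx" using lm0 eta by (intro mult_right_mono) auto
    also have "\<dots> = \<eta> * (r * ln Mx)" using etar by simp
    also have "\<dots> \<le> \<eta> * (2 * Mx)" using key eta by (intro mult_left_mono) auto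
    finally show ?thesis by simp
  qed
  have eM: "\<eta> \<le> \<eta> * Mx" using eta Mpos by simp
  have nM: "nn \<le> \<eta> * Mx" using M2 Mle1 by linarith
  have nlna: "nn * ln a \<le> 8 * \<eta> * Mx"
  proof -
    have "nn * ln a \<le> nn * (5 + \<eta> + ln Mx)" using la le nn by (intro mult_left_mono) auto
    also have "\<dots> = 5 * nn + nn * \<eta> + nn * ln Mx" by (simp add: algebra_simps)
    also have "nn * \<eta> \<le> Mx * \<eta>" using M2 eta by (intro mult_right_mono) auto
    finally show ?thesis using n1 nM by (simp add: algebra_simps)
  qed
  have elna: "\<eta> * ln a \<le> 4 * \<eta> * Mx"
  proof -
    have "\<eta> * ln a \<le> \<eta> * (4 + \<eta> + Mx)" using la le lm eta by (intro mult_left_mono) auto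
    also have "\<dots> = 4 * \<eta> + \<eta> * \<eta> + \<eta> * Mx" by (simp add: algebra_simps)
    also have "\<eta> * \<eta> \<le> \<eta> * Mx" using M1 eta by (intro mult_left_mono) auto
    also have "4 * \<eta> \<le> 2 * (\<eta> * Mx)"
    proof -
      have "\<eta> * 2 \<le> \<eta> * Mx" using Mpos eta by (intro mult_left_mono) auto
      then show ?thesis by linarith
    qed
    finally show ?thesis by (simp add: algebra_simps)
  qed
  define M where "M = max nn \<eta>"
  have Mle: "M \<le> nn + \<eta>" "M \<le> Mx" "0 \<le> M" using nn eta M1 M2 unfolding M_def by auto
  have "M * ln a \<le> (nn + \<eta>) * ln a" using Mle lna0 by (intro mult_right_mono) auto
  then have t1: "M * ln a \<le> 12 * \<eta> * Mx" using nlna elna by (simp add: algebra_simps)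
  have t2: "M * \<eta> \<le> \<eta> * Mx" using Mle eta by (simp add: mult.commute mult_left_mono)
  have t3: "M \<le> \<eta> * Mx" using Mle Mle1 by linarith
  have "2 * M * (2 * ln a + \<eta> + 3/2) = 4 * (M * ln a) + 2 * (M * \<eta>) + 3 * M" by (simp add: algebra_simps)
  also have "\<dots> \<le> 53 * \<eta> * Mx" using t1 t2 t3 by linarith
  also have "\<dots> \<le> a" using a1 eMp by linarith
  finally show ?thesis unfolding M_def .
qed


context lr begin

lemma part2: assumes s: "L (w s) \<le> 1 / \<eta>" and ts: "s < t"
  shows "L (w t) \<le> (2 * F (w s) + (ln (\<gamma>^2 * \<eta> * real (t - s)))^2) / (\<gamma>^2 * \<eta> * real (t - s))"
proof -
  define j where "j = t - s"
  define a where "a = \<gamma>^2 * \<eta> * real j"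
  have jpos: "0 < real j" unfolding j_def using ts by simp
  have gne: "\<gamma> \<noteq> 0" "\<eta> \<noteq> 0" using gamma_pos eta_pos by auto
  have apos: "0 < a" unfolding a_def using gamma_pos eta_pos jpos by simp
  have Fnn: "0 \<le> F (w s)" using L_nonneg[of "w s"] L_le_F[of "w s"] by linarith
  have tj: "t = s + j" unfolding j_def using ts by simp
  have "L (w t) \<le> (2 * F (w s) + (ln a)^2) / a"
  proof (cases "1 \<le> a")
    case True
    define R where "R = ln a / \<gamma>"
    have R0: "0 \<le> R" unfolding R_def using True gamma_pos by simp
    have gR: "\<gamma> * R = ln a" unfolding R_def using gne by simp
    define u where "u = w s + R *\<^sub>R ws"
    have A: "(norm (w (s + j) - u))^2 + \<eta> * (\<Sum>k<j. L (w (s + k))) \<le> (norm (w s - u))^2 + 2 * \<eta> * real j * L u"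
      by (rule sumB[OF s])
    have nu: "norm (w s - u) = R" unfolding u_def using ws_unit R0 by simp
    have Lu: "L u \<le> F (w s) / a"
    proof -
      have "L u \<le> exp (- (\<gamma> * R)) * F (w s)" unfolding u_def by (rule L_shift_bound[OF R0])
      then show ?thesis unfolding gR using apos by (simp add: exp_minus exp_ln divide_inverse mult.commute)
    qed
    have lowS: "real j * L (w t) \<le> (\<Sum>k<j. L (w (s + k)))"
    proof -
      have "(\<Sum>k<j. L (w t)) \<le> (\<Sum>k<j. L (w (s + k)))"
      proof (rule sum_mono)
        fix k assume "k \<in> {..<j}"
        then show "L (w t) \<le> L (w (s + k))" using stable_mono[OF s, of "s + k" t] tj by simp
      qed
      then show ?thesis by simp
    qed
    have "\<eta> * (real j * L (w t)) \<le> \<eta> * (\<Sum>k<j. L (w (s + k)))" using lowS eta_pos by (intro mult_left_mono) auto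
    also have "\<dots> \<le> R^2 + 2 * \<eta> * real j * L u" using A nu by (smt (verit) zero_le_power2)
    also have "2 * \<eta> * real j * L u \<le> 2 * \<eta> * real j * (F (w s) / a)" using Lu eta_pos jpos by (intro mult_left_mono) auto
    finally have m: "(\<eta> * real j) * L (w t) \<le> R^2 + 2 * \<eta> * real j * (F (w s) / a)" by (simp add: mult.assoc)
    have ej: "0 < \<eta> * real j" using eta_pos jpos by simp
    have "L (w t) \<le> (R^2 + 2 * \<eta> * real j * (F (w s) / a)) / (\<eta> * real j)"
      using m ej by (simp add: pos_le_divide_eq mult.commute)
    also have "\<dots> = (2 * F (w s) + (ln a)^2) / a" unfolding R_def a_def using gne jpos by (simp add: field_simps power2_eq_square)
    finally show ?thesis .
  next
    case False
    have "L (w t) \<le> L (w s)" using stable_mono[OF s, of s t] ts by simp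
    also have "\<dots> \<le> F (w s)" by (rule L_le_F)
    also have "\<dots> \<le> 2 * F (w s) + (ln a)^2" using Fnn by simp
    also have "\<dots> \<le> (2 * F (w s) + (ln a)^2) / a"
    proof -
      have "0 \<le> 2 * F (w s) + (ln a)^2" using Fnn by simp
      then show ?thesis using False apos by (simp add: le_divide_eq mult_le_cancel_left1 mult_left_le)
    qed
    finally show ?thesis .
  qed
  then show ?thesis unfolding a_def j_def .
qed


lemma part3: "\<exists>s::nat. real s \<le> (60 / \<gamma>^2) * Max {\<eta>, real n, exp 1,
                   ((\<eta> + real n) / \<eta>) * ln ((\<eta> + real n) / \<eta>)}
           \<and> L (w s) \<le> 1 / \<eta> \<and> F (w s) \<le> 1"
proof -
  define Mx where "Mx = Max {\<eta>, real n, exp 1, ((\<eta> + real n) / \<eta>) * ln ((\<eta> + real n) / \<eta>)}"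
  have fin: "finite {\<eta>, real n, exp 1, ((\<eta> + real n) / \<eta>) * ln ((\<eta> + real n) / \<eta>)}" by simp
  have M1: "\<eta> \<le> Mx" unfolding Mx_def by (rule Max_ge[OF fin]) simp
  have M2: "real n \<le> Mx" unfolding Mx_def by (rule Max_ge[OF fin]) simp
  have M3: "exp 1 \<le> Mx" unfolding Mx_def by (rule Max_ge[OF fin]) simp
  have M4: "((\<eta> + real n) / \<eta>) * ln ((\<eta> + real n) / \<eta>) \<le> Mx" unfolding Mx_def by (rule Max_ge[OF fin]) simp
  have ee: "2 \<le> exp (1::real)" using exp_ge_add_one_self[of 1] by simp
  have Mx2: "2 \<le> Mx" using M3 ee by linarith
  have gne: "\<gamma> \<noteq> 0" "\<eta> \<noteq> 0" using gamma_pos eta_pos by auto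
  define \<tau> where "\<tau> = (60 / \<gamma>^2) * Mx"
  have tau0: "0 \<le> \<tau>" unfolding \<tau>_def using Mx2 gamma_pos by simp
  have "\<exists>s::nat. real s \<le> \<tau> \<and> L (w s) \<le> 1 / \<eta> \<and> F (w s) \<le> 1"
  proof (cases "ln 2 \<le> 1 / \<eta>")
    case True
    then show ?thesis using tau0 L0 F0 gd0 by (intro exI[of _ 0]) simp
  next
    case False
    have "ln (2::real) \<le> 1" using ln_le_minus_one[of 2] by simp
    then have "1 / \<eta> < 1" using False by linarith
    then have eta1: "1 \<le> \<eta>" using eta_pos by (simp add: divide_less_eq)
    define t where "t = nat \<lfloor>\<tau>\<rfloor>"
    have tle: "real t \<le> \<tau>" unfolding t_def using tau0 by simp
    have tge: "\<tau> - 1 \<le> real t" unfolding t_def using tau0 by linarith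
    define a where "a = \<gamma>^2 * \<eta> * real t"
    have g2: "0 < \<gamma>^2" "\<gamma>^2 \<le> 1" using gamma_pos gamma_le1 by (auto simp: power_le_one)
    have a2: "a \<le> 60 * \<eta> * Mx"
    proof -
      have "a \<le> \<gamma>^2 * \<eta> * \<tau>" unfolding a_def using tle g2 eta_pos by (intro mult_left_mono) auto
      also have "\<dots> = 60 * \<eta> * Mx" unfolding \<tau>_def using gne by (simp add: field_simps)
      finally show ?thesis .
    qed
    have a1: "59 * \<eta> * Mx \<le> a"
    proof -
      have "\<gamma>^2 * \<eta> * (\<tau> - 1) \<le> a" unfolding a_def using tge g2 eta_pos by (intro mult_left_mono) auto
      moreover have "\<gamma>^2 * \<eta> * (\<tau> - 1) = 60 * \<eta> * Mx - \<gamma>^2 * \<eta>" unfolding \<tau>_def using gne by (simp add: field_simps)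
      moreover have "\<gamma>^2 * \<eta> \<le> 1 * \<eta>" using g2 eta_pos by (intro mult_right_mono) auto
      moreover have "1 * \<eta> \<le> \<eta> * Mx" using Mx2 eta_pos by simp
      ultimately show ?thesis by linarith
    qed
    have eMp: "2 \<le> \<eta> * Mx" using eta1 Mx2 mult_mono[of 1 \<eta> 2 Mx] by simp
    have a_ge1: "1 \<le> a" using a1 eMp by linarith
    have apos: "0 < a" using a_ge1 by simp
    have tpos: "0 < real t" using apos unfolding a_def using g2 eta_pos
      by (metis mult_eq_0_iff of_nat_0_less_iff gr0I less_numeral_extra(3) of_nat_0)
    have num: "2 * max (real n) \<eta> * (2 * ln a + \<eta> + 3/2) \<le> a"
      by (rule numeric[OF eta1 _ M1 M2 M3 M4 a1 a2]) (use n_pos in simp)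
    define R where "R = ln a / \<gamma>"
    define c where "c = \<eta> / (2 * \<gamma>)"
    have R0: "0 \<le> R" unfolding R_def using a_ge1 gamma_pos by simp
    have c0: "0 \<le> c" unfolding c_def using gamma_pos eta_pos by simp
    have gR: "\<gamma> * R = ln a" unfolding R_def using gne by simp
    define u where "u = R *\<^sub>R ws + c *\<^sub>R ws"
    define S where "S = (\<Sum>k<t. L (w k))"
    have S0: "0 \<le> S" unfolding S_def using L_nonneg by (simp add: sum_nonneg)
    have A: "(norm (w t - u))^2 + 2 * \<eta> * S \<le> (norm u)^2 + 2 * \<eta> * real t * L (R *\<^sub>R ws)"
      using sumA[of t "R *\<^sub>R ws"] unfolding c_def S_def u_def by simp
    have Lb: "L (R *\<^sub>R ws) \<le> 1 / a"
    proof -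
      have "L (0 + R *\<^sub>R ws) \<le> exp (- (\<gamma> * R)) * F 0" by (rule L_shift_bound[OF R0])
      then show ?thesis unfolding gR F0 using apos by (simp add: exp_minus exp_ln divide_inverse)
    qed
    have "2 * \<eta> * real t * L (R *\<^sub>R ws) \<le> 2 * \<eta> * real t * (1 / a)"
      using Lb eta_pos tpos by (intro mult_left_mono) auto
    also have "\<dots> = 2 / \<gamma>^2" unfolding a_def using gne tpos by (simp add: field_simps)
    finally have B: "2 * \<eta> * real t * L (R *\<^sub>R ws) \<le> 2 / \<gamma>^2" .
    have nu: "norm u = R + c" unfolding u_def norm_ws_comb using R0 c0 by simp
    have "(norm (w t - u))^2 \<le> (R + c)^2 + 2 / \<gamma>^2"
      using A B S0 nu eta_pos by (smt (verit) mult_nonneg_nonneg)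
    also have "\<dots> \<le> (R + c + 3 / (2 * \<gamma>))^2"
    proof -
      have "(R + c + 3 / (2 * \<gamma>))^2 = (R + c)^2 + (R + c) * (3 / \<gamma>) + 9 / (4 * \<gamma>^2)"
        using gne by (simp add: power2_eq_square field_simps)
      moreover have "0 \<le> (R + c) * (3 / \<gamma>)" using R0 c0 gamma_pos by simp
      moreover have "2 / \<gamma>^2 \<le> 9 / (4 * \<gamma>^2)" using g2 by (simp add: divide_simps)
      ultimately show ?thesis by linarith
    qed
    finally have "(norm (w t - u))^2 \<le> (R + c + 3 / (2 * \<gamma>))^2" .
    moreover have "0 \<le> R + c + 3 / (2 * \<gamma>)"
    proof -
      have "0 \<le> 3 / (2 * \<gamma>)" using gamma_pos by simp
      then show ?thesis using R0 c0 by linarith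
    qed
    ultimately have nwu: "norm (w t - u) \<le> R + c + 3 / (2 * \<gamma>)"
      by (rule power2_le_imp_le)
    have "norm (w t) \<le> norm u + norm (w t - u)" by (rule norm_triangle_sub)
    moreover have "norm u + norm (w t - u) \<le> (R + c) + (R + c + 3 / (2 * \<gamma>))" using nwu nu by simp
    ultimately have nw0: "norm (w t) \<le> (R + c) + (R + c + 3 / (2 * \<gamma>))" by (rule order_trans)
    have "(R + c) + (R + c + 3 / (2 * \<gamma>)) = 2 * (R + c) + 3 / (2 * \<gamma>)" by simp
    then have nw: "norm (w t) \<le> 2 * (R + c) + 3 / (2 * \<gamma>)" using nw0 by simp
    have "w t \<bullet> ws \<le> norm (w t)"
      using Cauchy_Schwarz_ineq2[of "w t" ws] ws_unit by simp
    then have "\<eta> * \<gamma> * (\<Sum>k<t. GG (w k)) \<le> 2 * (R + c) + 3 / (2 * \<gamma>)" using perceptron[of t] nw by linarith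
    then have "\<gamma> * (\<eta> * \<gamma> * (\<Sum>k<t. GG (w k))) \<le> \<gamma> * (2 * (R + c) + 3 / (2 * \<gamma>))"
      using gamma_pos by (intro mult_left_mono) auto
    also have "\<gamma> * (2 * (R + c) + 3 / (2 * \<gamma>)) = 2 * ln a + \<eta> + 3/2"
      unfolding R_def c_def using gne by (simp add: field_simps)
    finally have P: "(\<gamma>^2 * \<eta>) * (\<Sum>k<t. GG (w k)) \<le> 2 * ln a + \<eta> + 3/2"
      by (simp add: power2_eq_square algebra_simps)
    define M where "M = max (real n) \<eta>"
    have Mpos: "0 < M" unfolding M_def using eta_pos by simp
    have "\<exists>k<t. GG (w k) \<le> 1 / (2 * M)"
    proof (rule ccontr)
      assume "\<not> ?thesis"
      then have lt: "\<And>k. k < t \<Longrightarrow> 1 / (2 * M) < GG (w k)" by force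
      have ne: "{..<t} \<noteq> {}" using tpos by auto
      have "(\<Sum>k<t. 1 / (2 * M)) < (\<Sum>k<t. GG (w k))"
        using lt ne by (intro sum_strict_mono) auto
      then have "real t / (2 * M) < (\<Sum>k<t. GG (w k))" by simp
      then have "(\<gamma>^2 * \<eta>) * (real t / (2 * M)) < (\<gamma>^2 * \<eta>) * (\<Sum>k<t. GG (w k))"
        using g2 eta_pos by (intro mult_strict_left_mono) auto
      also have "(\<gamma>^2 * \<eta>) * (real t / (2 * M)) = a / (2 * M)" unfolding a_def by simp
      finally have "a / (2 * M) < 2 * ln a + \<eta> + 3/2" using P by linarith
      then have "a < 2 * M * (2 * ln a + \<eta> + 3/2)" using Mpos by (simp add: divide_less_eq mult.commute)
      then show False using num unfolding M_def by linarith
    qed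
    then obtain k where k: "k < t" "GG (w k) \<le> 1 / (2 * M)" by blast
    have "1 / (2 * M) \<le> 1 / (2 * real n)" unfolding M_def using n_real by (intro divide_left_mono) auto
    then have g1: "GG (w k) \<le> 1 / (2 * real n)" using k by linarith
    have "1 / (2 * M) \<le> 1 / (2 * \<eta>)" unfolding M_def using eta_pos by (intro divide_left_mono) auto
    then have g2': "GG (w k) \<le> 1 / (2 * \<eta>)" using k by linarith
    have F1: "F (w k) \<le> 1" by (rule small_GG(1)[OF g1])
    have "L (w k) \<le> F (w k)" by (rule L_le_F)
    also have "\<dots> \<le> 2 * GG (w k)" by (rule small_GG(2)[OF g1])
    also have "\<dots> \<le> 2 * (1 / (2 * \<eta>))" using g2' by simp
    finally have L1: "L (w k) \<le> 1 / \<eta>" by simp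
    have "real k \<le> \<tau>" using k(1) tle by simp
    then show ?thesis using F1 L1 by blast
  qed
  then show ?thesis unfolding \<tau>_def Mx_def .
qed

end

theorem theorem1:
  fixes n :: nat and x :: "nat \<Rightarrow> 'a::euclidean_space" and y :: "nat \<Rightarrow> real"
    and \<gamma> \<eta> :: real and wstar :: 'a and w :: "nat \<Rightarrow> 'a"
  assumes n_pos: "n \<ge> 1"
    and labels: "\<forall>i<n. y i \<in> {-1, 1}"
    and bounded: "\<forall>i<n. norm (x i) \<le> 1"
    and gamma_pos: "\<gamma> > 0"
    and wstar_unit: "norm wstar = 1"
    and margin: "\<forall>i<n. y i * (x i \<bullet> wstar) \<ge> \<gamma>"
    and eta_pos: "\<eta> > 0"
    and GD: "is_GD (logistic_risk n x y) \<eta> w"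
  shows
    "(\<forall>t::nat. t \<ge> 1 \<longrightarrow>
        (1 / real t) * (\<Sum>k<t. logistic_risk n x y (w k))
          \<le> (1 + (ln (\<gamma>^2 * \<eta> * real t))^2 + \<eta>^2 / 4) / (\<gamma>^2 * \<eta> * real t))
     \<and> (\<forall>s::nat. logistic_risk n x y (w s) \<le> 1 / \<eta> \<longrightarrow>
        (\<forall>t\<ge>s. logistic_risk n x y (w (Suc t)) \<le> logistic_risk n x y (w t)) \<and>
        (\<forall>t>s. logistic_risk n x y (w t)
           \<le> (2 * exp_risk n x y (w s) + (ln (\<gamma>^2 * \<eta> * real (t - s)))^2)
               / (\<gamma>^2 * \<eta> * real (t - s))))
     \<and> (\<exists>s::nat. real s \<le> (60 / \<gamma>^2) * Max {\<eta>, real n, exp 1,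
                   ((\<eta> + real n) / \<eta>) * ln ((\<eta> + real n) / \<eta>)}
           \<and> logistic_risk n x y (w s) \<le> 1 / \<eta> \<and> exp_risk n x y (w s) \<le> 1)"
  proof -
  interpret lr n x y \<gamma> \<eta> wstar w
    using assms by unfold_locales auto
  have P1: "\<forall>t::nat. t \<ge> 1 \<longrightarrow>
        (1 / real t) * (\<Sum>k<t. logistic_risk n x y (w k))
          \<le> (1 + (ln (\<gamma>^2 * \<eta> * real t))^2 + \<eta>^2 / 4) / (\<gamma>^2 * \<eta> * real t)"
    using part1 by blast
  have P2: "\<forall>s::nat. logistic_risk n x y (w s) \<le> 1 / \<eta> \<longrightarrow>
        (\<forall>t\<ge>s. logistic_risk n x y (w (Suc t)) \<le> logistic_risk n x y (w t)) \<and>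
        (\<forall>t>s. logistic_risk n x y (w t)
           \<le> (2 * exp_risk n x y (w s) + (ln (\<gamma>^2 * \<eta> * real (t - s)))^2)
               / (\<gamma>^2 * \<eta> * real (t - s)))"
  proof (intro allI impI conjI)
    fix s t assume hs: "logistic_risk n x y (w s) \<le> 1 / \<eta>"
    { assume "s \<le> t"
      then show "logistic_risk n x y (w (Suc t)) \<le> logistic_risk n x y (w t)"
        using stable_mono[OF hs, of t "Suc t"] by simp }
    { assume "s < t"
      then show "logistic_risk n x y (w t)
           \<le> (2 * exp_risk n x y (w s) + (ln (\<gamma>^2 * \<eta> * real (t - s)))^2)
               / (\<gamma>^2 * \<eta> * real (t - s))"
        by (rule part2[OF hs]) }
  qed
  show ?thesis using P1 P2 part3 by blast
qed

end
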